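(* For every integer $n>1$ and every admissible total-degree monomial ordering on $R_n$, every Gröbner basis of the ideal $(G_n)$ with respect to that ordering has at least $6n+3^n$ elements.
   Context: Let $R_n=\mathbb{F}_2[x_1,\ldots,x_n,y_1,\ldots,y_n,z_1,\ldots,z_n]$ with $\mathbb{F}_2=\mathbb{Z}/(2)$. For $S\subseteq R_n$, $(S)$ denotes the ideal generated by $S$. A total-degree ordering is an admissible monomial ordering that first compares total degrees. Define $S_n=\{c^2-c : c\in\{x_1,\ldots,x_n,y_1,\ldots,y_n,z_1,\ldots,z_n\}\}$, $L_n=\{x_iy_i+x_i+y_i-z_i : i=1,\ldots,n\}$, $T_n=\{x_iz_i-x_i : i=1,\ldots,n\}\cup\{y_iz_i-y_i : i=1,\ldots,n\}$, $P_n=\{\prod_{i=1}^n c_i : c_i\in\{x_i,y_i,z_i\}\text{ for each } i\}$, $G_n=S_n\cup L_n\cup T_n\cup P_n$. *)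

theory Defs
  imports "HOL-Library.Poly_Mapping" "HOL-Library.Z2" "HOL-Library.Cardinality"
begin

text \<open>Variables of R_n: x_i, y_i, z_i for i ranging over the finite index type 'n
  (with CARD('n) = n).\<close>

datatype xyz = VX | VY | VZ

type_synonym 'n mon = "('n \<times> xyz) \<Rightarrow>\<^sub>0 nat"
type_synonym 'n pol = "'n mon \<Rightarrow>\<^sub>0 bit"

definition var :: "'n \<times> xyz \<Rightarrow> 'n pol" where
  "var v = Poly_Mapping.single (Poly_Mapping.single v 1) 1"

abbreviation X :: "'n \<Rightarrow> 'n pol" where "X i \<equiv> var (i, VX)"
abbreviation Y :: "'n \<Rightarrow> 'n pol" where "Y i \<equiv> var (i, VY)"
abbreviation Z :: "'n \<Rightarrow> 'n pol" where "Z i \<equiv> var (i, VZ)"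

definition S_set :: "'n pol set" where
  "S_set = {var v ^ 2 - var v | v. True}"

definition L_set :: "'n pol set" where
  "L_set = {X i * Y i + X i + Y i - Z i | i. True}"

definition T_set :: "'n pol set" where
  "T_set = {X i * Z i - X i | i. True} \<union> {Y i * Z i - Y i | i. True}"

definition P_set :: "'n::finite pol set" where
  "P_set = {(\<Prod>i\<in>UNIV. var (i, c i)) | c. True}"

definition G_set :: "'n::finite pol set" where
  "G_set = S_set \<union> L_set \<union> T_set \<union> P_set"

definition ideal_gen :: "'n pol set \<Rightarrow> 'n pol set" where
  "ideal_gen S = {(\<Sum>s\<in>F. h s * s) | F h. finite F \<and> F \<subseteq> S}"

definition tdeg :: "'n mon \<Rightarrow> nat" where
  "tdeg m = (\<Sum>v\<in>Poly_Mapping.keys m. Poly_Mapping.lookup m v)"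

definition admissible_order :: "('n mon \<Rightarrow> 'n mon \<Rightarrow> bool) \<Rightarrow> bool" where
  "admissible_order le \<longleftrightarrow>
     (\<forall>a. le a a) \<and>
     (\<forall>a b c. le a b \<longrightarrow> le b c \<longrightarrow> le a c) \<and>
     (\<forall>a b. le a b \<longrightarrow> le b a \<longrightarrow> a = b) \<and>
     (\<forall>a b. le a b \<or> le b a) \<and>
     (\<forall>a. le 0 a) \<and>
     (\<forall>a b c. le a b \<longrightarrow> le (a + c) (b + c)) \<and>
     wfP (\<lambda>a b. le a b \<and> a \<noteq> b)"

definition total_degree_order :: "('n mon \<Rightarrow> 'n mon \<Rightarrow> bool) \<Rightarrow> bool" where
  "total_degree_order le \<longleftrightarrow> admissible_order le \<and>
     (\<forall>a b. tdeg a < tdeg b \<longrightarrow> le a b \<and> a \<noteq> b)"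

definition lm :: "('n mon \<Rightarrow> 'n mon \<Rightarrow> bool) \<Rightarrow> 'n pol \<Rightarrow> 'n mon" where
  "lm le p = (THE m. m \<in> Poly_Mapping.keys p \<and> (\<forall>m'\<in>Poly_Mapping.keys p. le m' m))"

definition mdvd :: "'n mon \<Rightarrow> 'n mon \<Rightarrow> bool" where
  "mdvd a b \<longleftrightarrow> (\<forall>v. Poly_Mapping.lookup a v \<le> Poly_Mapping.lookup b v)"

definition is_groebner_basis ::
  "('n mon \<Rightarrow> 'n mon \<Rightarrow> bool) \<Rightarrow> 'n pol set \<Rightarrow> 'n pol set \<Rightarrow> bool" where
  "is_groebner_basis le I G \<longleftrightarrow> finite G \<and> G \<subseteq> I \<and>
     (\<forall>f\<in>I. f \<noteq> 0 \<longrightarrow> (\<exists>g\<in>G. g \<noteq> 0 \<and> mdvd (lm le g) (lm le f)))"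

end

theory Submission
  imports Defs "HOL-Library.FuncSet" "HOL-Library.Cardinality"
begin


declare power_bit_unfold [simp del] add_bit_eq_xor [simp del] mult_bit_eq_and [simp del]

lemma UNIV_xyz: "(UNIV :: xyz set) = {VX, VY, VZ}"
  using xyz.exhaust by auto

instance xyz :: finite
  by standard (simp add: UNIV_xyz)

lemma card_xyz: "card (UNIV :: xyz set) = 3"
  by (simp add: UNIV_xyz)

lemma UNIV_bit: "(UNIV :: bit set) = {0, 1}"
  by (auto intro: bit.exhaust)

definition mev :: "('n::finite \<times> xyz \<Rightarrow> bit) \<Rightarrow> 'n mon \<Rightarrow> bit" where
  "mev p u = (\<Prod>v\<in>UNIV. p v ^ Poly_Mapping.lookup u v)"

lemma mev_zero [simp]: "mev p 0 = 1"
  by (simp add: mev_def)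

lemma mev_add: "mev p (a + b) = mev p a * mev p b"
  by (simp add: mev_def lookup_add power_add prod.distrib)

definition ev :: "('n::finite \<times> xyz \<Rightarrow> bit) \<Rightarrow> 'n pol \<Rightarrow> bit" where
  "ev p f = (\<Sum>u\<in>Poly_Mapping.keys f. Poly_Mapping.lookup f u * mev p u)"

lemma ev_superset:
  assumes "finite K" "Poly_Mapping.keys f \<subseteq> K"
  shows "ev p f = (\<Sum>u\<in>K. Poly_Mapping.lookup f u * mev p u)"
  unfolding ev_def
  by (rule sum.mono_neutral_left) (use assms in \<open>auto simp: in_keys_iff\<close>)

lemma ev_add: "ev p (f + g) = ev p f + ev p g"
proof -
  let ?K = "Poly_Mapping.keys f \<union> Poly_Mapping.keys g"
  have "ev p (f + g) = (\<Sum>u\<in>?K. Poly_Mapping.lookup (f+g) u * mev p u)"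
    using keys_add[of f g] by (intro ev_superset) auto
  also have "\<dots> = (\<Sum>u\<in>?K. Poly_Mapping.lookup f u * mev p u) + (\<Sum>u\<in>?K. Poly_Mapping.lookup g u * mev p u)"
    by (simp add: lookup_add distrib_right sum.distrib)
  also have "\<dots> = ev p f + ev p g"
    by (subst (1 2) ev_superset[of ?K]) auto
  finally show ?thesis .
qed

lemma ev_zero [simp]: "ev p 0 = 0"
  by (simp add: ev_def)

lemma ev_uminus: "ev p (- f) = - ev p f"
  by (simp add: ev_def sum_negf)

lemma ev_diff: "ev p (f - g) = ev p f - ev p g"
  using ev_add[of p f "-g"] by (simp add: ev_uminus)

lemma ev_sum: "ev p (sum h A) = (\<Sum>a\<in>A. ev p (h a))"
  by (induction A rule: infinite_finite_induct) (auto simp: ev_add)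

lemma ev_single [simp]: "ev p (Poly_Mapping.single u c) = c * mev p u"
  by (simp add: ev_def)

lemma poly_expand: "f = (\<Sum>u\<in>Poly_Mapping.keys f. Poly_Mapping.single u (Poly_Mapping.lookup f u))"
proof (rule poly_mapping_eqI)
  fix k
  show "Poly_Mapping.lookup f k = Poly_Mapping.lookup (\<Sum>u\<in>Poly_Mapping.keys f. Poly_Mapping.single u (Poly_Mapping.lookup f u)) k"
    by (cases "k \<in> Poly_Mapping.keys f")
      (auto simp: lookup_sum lookup_single when_def in_keys_iff)
qed

lemma ev_mult: "ev p (f * g) = ev p f * ev p g"
proof -
  have "f * g = (\<Sum>a\<in>Poly_Mapping.keys f. \<Sum>b\<in>Poly_Mapping.keys g.
      Poly_Mapping.single a (Poly_Mapping.lookup f a) * Poly_Mapping.single b (Poly_Mapping.lookup g b))"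
    by (subst (1) poly_expand, subst (2) poly_expand) (simp add: sum_product)
  hence "ev p (f * g) = (\<Sum>a\<in>Poly_Mapping.keys f. \<Sum>b\<in>Poly_Mapping.keys g.
      (Poly_Mapping.lookup f a * mev p a) * (Poly_Mapping.lookup g b * mev p b))"
    by (simp add: ev_sum mult_single mev_add mult_ac)
  also have "\<dots> = ev p f * ev p g"
    by (simp add: ev_def sum_product)
  finally show ?thesis .
qed

lemma ev_one [simp]: "ev p 1 = 1"
  using ev_single[of p 0 1] by (simp del: ev_single)

lemma ev_prod: "ev p (prod h A) = (\<Prod>a\<in>A. ev p (h a))"
  by (induction A rule: infinite_finite_induct) (auto simp: ev_mult)

lemma ev_var [simp]: "ev p (var v) = p v"
proof -
  have e: "(\<lambda>va. p va ^ (if v = va then 1 else 0)) = (\<lambda>va. if v = va then p va else 1)"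
    by auto
  have "(\<Prod>va\<in>UNIV. p va ^ (if v = va then 1 else 0)) = p v" 
    by (simp only: e) (simp add: prod.delta')
  thus ?thesis by (simp only: var_def ev_single mev_def lookup_single when_def mult_1)
qed

lemma ev_power: "ev p (f ^ k) = ev p f ^ k"
  by (induction k) (auto simp: ev_mult)



definition good :: "('n::finite \<times> xyz \<Rightarrow> bit) \<Rightarrow> bool" where
  "good p \<longleftrightarrow> (\<forall>i. p (i, VZ) = p (i, VX) + p (i, VY) + p (i, VX) * p (i, VY)) \<and>
     (\<exists>j. p (j, VZ) = 0)"

lemma bit2: "(a::bit) = 0 \<or> a = 1"
  by (cases a) auto

lemma ev_G:
  fixes p :: "'n::finite \<times> xyz \<Rightarrow> bit"
  assumes g: "good p" and s: "s \<in> G_set"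
  shows "ev p s = 0"
proof -
  from g have z: "\<And>i. p (i, VZ) = p (i, VX) + p (i, VY) + p (i, VX) * p (i, VY)"
    unfolding good_def by blast
  from g obtain j where j: "p (j, VZ) = 0" unfolding good_def by blast
  have jx: "p (j, VX) = 0" and jy: "p (j, VY) = 0"
    using z[of j] j bit2[of "p (j, VX)"] bit2[of "p (j, VY)"] by auto
  show ?thesis using s unfolding G_set_def
  proof (elim UnE)
    assume "s \<in> S_set"
    then obtain v where "s = var v ^ 2 - var v" unfolding S_set_def by blast
    thus ?thesis using bit2[of "p v"] by (auto simp: ev_diff ev_power)
  next
    assume "s \<in> L_set"
    then obtain i where "s = X i * Y i + X i + Y i - Z i" unfolding L_set_def by blast
    thus ?thesis using bit2[of "p (i, VX)"] bit2[of "p (i, VY)"] z[of i]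
      by (auto simp: ev_diff ev_add ev_mult)
  next
    assume "s \<in> T_set"
    then obtain i where "s = X i * Z i - X i \<or> s = Y i * Z i - Y i" unfolding T_set_def by blast
    thus ?thesis using bit2[of "p (i, VX)"] bit2[of "p (i, VY)"] z[of i]
      by (auto simp: ev_diff ev_add ev_mult)
  next
    assume "s \<in> P_set"
    then obtain c where sc: "s = (\<Prod>i\<in>UNIV. var (i, c i))" unfolding P_set_def by blast
    have "p (j, c j) = 0" using jx jy j by (cases "c j") auto
    hence "(\<Prod>i\<in>UNIV. p (i, c i)) = 0"
      by (intro prod_zero) auto
    thus ?thesis using sc by (simp add: ev_prod)
  qed
qed

lemma ev_ideal:
  fixes p :: "'n::finite \<times> xyz \<Rightarrow> bit"
  assumes g: "good p" and f: "f \<in> ideal_gen G_set"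
  shows "ev p f = 0"
proof -
  from f obtain F h where "f = (\<Sum>s\<in>F. h s * s)" "F \<subseteq> G_set"
    unfolding ideal_gen_def by blast
  thus ?thesis using ev_G[OF g] by (auto simp: ev_sum ev_mult intro!: sum.neutral)
qed

lemma gen_in_ideal: "s \<in> G_set \<Longrightarrow> s \<in> ideal_gen G_set"
  unfolding ideal_gen_def
  by (rule CollectI, rule exI[of _ "{s}"], rule exI[of _ "\<lambda>_. 1"]) auto



lemma tdeg_UNIV: "tdeg (m :: 'n::finite mon) = (\<Sum>v\<in>UNIV. Poly_Mapping.lookup m v)"
  unfolding tdeg_def
  by (rule sum.mono_neutral_left) (auto simp: in_keys_iff)

lemma tdeg_add: "tdeg (a + b :: 'n::finite mon) = tdeg a + tdeg b"
  by (simp add: tdeg_UNIV lookup_add sum.distrib)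

lemma tdeg_single [simp]: "tdeg (Poly_Mapping.single v k :: 'n::finite mon) = k"
  by (simp add: tdeg_def)

lemma tdeg_zero [simp]: "tdeg (0 :: 'n::finite mon) = 0"
  by (simp add: tdeg_def)

lemma adm_refl: "admissible_order le \<Longrightarrow> le a a"
  unfolding admissible_order_def by blast
lemma adm_trans: "admissible_order le \<Longrightarrow> le a b \<Longrightarrow> le b c \<Longrightarrow> le a c"
  unfolding admissible_order_def by blast
lemma adm_antisym: "admissible_order le \<Longrightarrow> le a b \<Longrightarrow> le b a \<Longrightarrow> a = b"
  unfolding admissible_order_def by blast
lemma adm_total: "admissible_order le \<Longrightarrow> le a b \<or> le b a"
  unfolding admissible_order_def by blast

lemma tdo_adm: "total_degree_order le \<Longrightarrow> admissible_order le"
  unfolding total_degree_order_def by blast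
lemma tdo_deg: "total_degree_order le \<Longrightarrow> tdeg a < tdeg b \<Longrightarrow> le a b \<and> a \<noteq> b"
  unfolding total_degree_order_def by blast

lemma adm_ex_max:
  assumes a: "admissible_order le" and "finite A" "A \<noteq> {}"
  shows "\<exists>m\<in>A. \<forall>m'\<in>A. le m' m"
  using assms(2,3)
proof (induction A rule: finite_ne_induct)
  case (singleton x) thus ?case using adm_refl[OF a] by auto
next
  case (insert x F)
  then obtain m where m: "m \<in> F" "\<forall>m'\<in>F. le m' m" by blast
  show ?case
  proof (cases "le x m")
    case True thus ?thesis using m adm_refl[OF a] by auto
  next
    case False
    hence "le m x" using adm_total[OF a, of x m] by blast
    thus ?thesis using m adm_refl[OF a, of x] adm_trans[OF a] by blast
  qed
qed

lemma lm_eqI: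
  assumes a: "admissible_order le" and m: "m \<in> Poly_Mapping.keys p" "\<forall>m'\<in>Poly_Mapping.keys p. le m' m"
  shows "lm le p = m"
  unfolding lm_def
proof (rule the_equality)
  show "m \<in> Poly_Mapping.keys p \<and> (\<forall>m'\<in>Poly_Mapping.keys p. le m' m)" using m by blast
  fix m' assume "m' \<in> Poly_Mapping.keys p \<and> (\<forall>m''\<in>Poly_Mapping.keys p. le m'' m')"
  thus "m' = m" using m adm_antisym[OF a, of m m'] by blast
qed

lemma lm_props:
  assumes a: "admissible_order le" and p: "p \<noteq> 0"
  shows "lm le p \<in> Poly_Mapping.keys p \<and> (\<forall>m'\<in>Poly_Mapping.keys p. le m' (lm le p))"
proof -
  have ne: "Poly_Mapping.keys p \<noteq> {}" using p by simp
  obtain m where m: "m \<in> Poly_Mapping.keys p" "\<forall>m'\<in>Poly_Mapping.keys p. le m' m"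
    using adm_ex_max[OF a finite_keys ne] by blast
  have "lm le p = m" by (rule lm_eqI[OF a m])
  thus ?thesis using m by simp
qed

lemma lm_by_deg:
  assumes t: "total_degree_order le"
    and m: "Poly_Mapping.lookup p m \<noteq> 0"
    and d: "\<forall>u\<in>Poly_Mapping.keys p. u \<noteq> m \<longrightarrow> tdeg u < tdeg m"
  shows "lm le p = m"
proof -
  have a: "admissible_order le" using tdo_adm[OF t] .
  show ?thesis
  proof (rule lm_eqI[OF a])
    show "m \<in> Poly_Mapping.keys p" using m by (simp add: in_keys_iff)
    show "\<forall>m'\<in>Poly_Mapping.keys p. le m' m"
    proof
      fix m' assume "m' \<in> Poly_Mapping.keys p"
      thus "le m' m" using d tdo_deg[OF t, of m' m] adm_refl[OF a, of m]
        by (cases "m' = m") auto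
    qed
  qed
qed

lemma lm_deg_bound:
  assumes t: "total_degree_order le" and p: "p \<noteq> 0" and u: "u \<in> Poly_Mapping.keys p"
  shows "tdeg u \<le> tdeg (lm le p)"
proof (rule ccontr)
  have a: "admissible_order le" using tdo_adm[OF t] .
  assume "\<not> tdeg u \<le> tdeg (lm le p)"
  hence "le (lm le p) u" "lm le p \<noteq> u" using tdo_deg[OF t, of "lm le p" u] by auto
  moreover have "le u (lm le p)" using lm_props[OF a p] u by blast
  ultimately show False using adm_antisym[OF a] by blast
qed



definition isum :: "'n mon \<Rightarrow> 'n \<Rightarrow> nat" where
  "isum d i = Poly_Mapping.lookup d (i, VX) + Poly_Mapping.lookup d (i, VY) + Poly_Mapping.lookup d (i, VZ)"

definition opi :: "'n mon \<Rightarrow> bool" where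
  "opi d \<longleftrightarrow> (\<forall>i. isum d i \<le> 1) \<and> (\<exists>j. isum d j = 0)"

lemma all_xyz: "(\<forall>t. P t) \<longleftrightarrow> P VX \<and> P VY \<and> P VZ"
  by (metis xyz.exhaust)

lemma sum_xyz: "(\<Sum>t\<in>UNIV. f t) = f VX + f VY + (f VZ :: 'a :: comm_monoid_add)"
  by (simp add: UNIV_xyz add.assoc)

lemma prod_xyz: "(\<Prod>t\<in>UNIV. f t) = f VX * f VY * (f VZ :: 'a :: comm_monoid_mult)"
  by (simp add: UNIV_xyz mult.assoc)

lemma tdeg_isum: "tdeg (m :: 'n::finite mon) = (\<Sum>i\<in>UNIV. isum m i)"
proof -
  have "tdeg m = (\<Sum>v\<in>UNIV \<times> UNIV. Poly_Mapping.lookup m v)"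
    by (simp add: tdeg_UNIV UNIV_Times_UNIV)
  also have "\<dots> = (\<Sum>i\<in>UNIV. \<Sum>t\<in>UNIV. Poly_Mapping.lookup m (i, t))"
    by (simp add: sum.cartesian_product)
  also have "\<dots> = (\<Sum>i\<in>UNIV. isum m i)"
    by (simp add: sum_xyz isum_def)
  finally show ?thesis .
qed

definition zf :: "bit \<times> bit \<Rightarrow> bit" where
  "zf r = fst r + snd r + fst r * snd r"

definition pt :: "('n \<Rightarrow> bit \<times> bit) \<Rightarrow> 'n \<times> xyz \<Rightarrow> bit" where
  "pt q v = (case snd v of VX \<Rightarrow> fst (q (fst v)) | VY \<Rightarrow> snd (q (fst v)) | VZ \<Rightarrow> zf (q (fst v)))"

definition Fv :: "bit \<times> bit \<Rightarrow> 'n mon \<Rightarrow> 'n \<Rightarrow> bit" where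
  "Fv r u i = fst r ^ Poly_Mapping.lookup u (i, VX) * snd r ^ Poly_Mapping.lookup u (i, VY) *
      zf r ^ Poly_Mapping.lookup u (i, VZ)"

lemma mev_pt: "mev (pt q) (u :: 'n::finite mon) = (\<Prod>i\<in>UNIV. Fv (q i) u i)"
proof -
  have "mev (pt q) u = (\<Prod>v\<in>UNIV \<times> UNIV. pt q v ^ Poly_Mapping.lookup u v)"
    by (simp add: mev_def UNIV_Times_UNIV)
  also have "\<dots> = (\<Prod>i\<in>UNIV. \<Prod>t\<in>UNIV. pt q (i, t) ^ Poly_Mapping.lookup u (i, t))"
    by (simp add: prod.cartesian_product)
  also have "\<dots> = (\<Prod>i\<in>UNIV. Fv (q i) u i)"
    by (simp add: prod_xyz Fv_def pt_def)
  finally show ?thesis .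
qed

lemma good_pt: "q j = (0, 0) \<Longrightarrow> good (pt q)"
  unfolding good_def pt_def zf_def by (auto intro: exI[of _ j])

definition Qd :: "'n mon \<Rightarrow> 'n \<Rightarrow> (bit \<times> bit) set" where
  "Qd d i = (if isum d i = 0 then {(0,0)}
     else if Poly_Mapping.lookup d (i, VX) \<noteq> 0 then {(1,1),(0,1)}
     else if Poly_Mapping.lookup d (i, VY) \<noteq> 0 then {(1,1),(1,0)} else UNIV)"

definition Gs :: "'n mon \<Rightarrow> 'n mon \<Rightarrow> 'n \<Rightarrow> bit" where
  "Gs d u i = (\<Sum>r\<in>Qd d i. Fv r u i)"

lemma UNIV_bit2: "(UNIV :: (bit \<times> bit) set) = {(0,0),(0,1),(1,0),(1,1)}"
  using bit2 by auto

lemma nat3_1: "(a::nat) + b + c = 1 \<Longrightarrow> (a = 1 \<and> b = 0 \<and> c = 0) \<or> (a = 0 \<and> b = 1 \<and> c = 0) \<or> (a = 0 \<and> b = 0 \<and> c = 1)"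
  by arith

lemma G0: "isum d i = 0 \<Longrightarrow> Gs d u i = (if isum u i = 0 then 1 else 0)"
  by (auto simp: Gs_def Qd_def Fv_def zf_def isum_def power_0_left)

lemma G1:
  assumes "isum d i = 1" "isum u i = 0" shows "Gs d u i = 0"
proof -
  have u: "Poly_Mapping.lookup u (i, VX) = 0" "Poly_Mapping.lookup u (i, VY) = 0" "Poly_Mapping.lookup u (i, VZ) = 0"
    using assms(2) by (auto simp: isum_def)
  from nat3_1[OF assms(1)[unfolded isum_def]] show ?thesis
    by (elim disjE) (auto simp: Gs_def Qd_def Fv_def zf_def isum_def UNIV_bit2 u)
qed

lemma G2:
  assumes "isum d i = 1" "isum u i = 1"
  shows "Gs d u i = (if \<forall>t. Poly_Mapping.lookup u (i, t) = Poly_Mapping.lookup d (i, t) then 1 else 0)"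
  using nat3_1[OF assms(1)[unfolded isum_def]] nat3_1[OF assms(2)[unfolded isum_def]]
  by (elim disjE) (auto simp: all_xyz Gs_def Qd_def Fv_def zf_def isum_def UNIV_bit2)



lemma phi_mon:
  fixes d u :: "'n::finite mon"
  assumes o: "opi d" and deg: "tdeg u \<le> tdeg d"
  shows "(\<Sum>q\<in>PiE UNIV (Qd d). mev (pt q) u) = (if u = d then 1 else 0)"
proof -
  have "(\<Sum>q\<in>PiE UNIV (Qd d). mev (pt q) u) = (\<Sum>q\<in>PiE UNIV (Qd d). \<Prod>i\<in>UNIV. Fv (q i) u i)"
    by (simp add: mev_pt)
  also have "\<dots> = (\<Prod>i\<in>UNIV. Gs d u i)"
    unfolding Gs_def by (rule prod_sum_PiE[symmetric]) (auto simp: Qd_def UNIV_bit2)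
  finally have eq: "(\<Sum>q\<in>PiE UNIV (Qd d). mev (pt q) u) = (\<Prod>i\<in>UNIV. Gs d u i)" .
  have le1: "\<And>i. isum d i = 0 \<or> isum d i = 1" using o unfolding opi_def by (metis le_neq_implies_less less_one)
  show ?thesis
  proof (cases "u = d")
    case True
    have "\<And>i. Gs d d i = 1"
    proof -
      fix i show "Gs d d i = 1" using le1[of i] G0[of d i d] G2[of d i d] by auto
    qed
    thus ?thesis using True eq by simp
  next
    case False
    have "\<exists>i. Gs d u i = 0"
    proof (rule ccontr)
      assume "\<not> (\<exists>i. Gs d u i = 0)"
      hence nz: "\<And>i. Gs d u i \<noteq> 0" by blast
      have ge: "\<And>i. isum d i \<le> isum u i"
      proof -
        fix i show "isum d i \<le> isum u i"
          using le1[of i] G1[of d i u] nz[of i] by (cases "isum u i = 0") auto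
      qed
      have eqs: "\<And>i. isum u i = isum d i"
      proof (rule ccontr)
        fix i assume "isum u i \<noteq> isum d i"
        hence "isum d i < isum u i" using ge[of i] by simp
        hence "(\<Sum>i\<in>UNIV. isum d i) < (\<Sum>i\<in>UNIV. isum u i)"
          using ge by (intro sum_strict_mono_ex1) auto
        thus False using deg by (simp add: tdeg_isum)
      qed
      have "\<And>i t. Poly_Mapping.lookup u (i, t) = Poly_Mapping.lookup d (i, t)"
      proof -
        fix i t
        show "Poly_Mapping.lookup u (i, t) = Poly_Mapping.lookup d (i, t)"
        proof (cases "isum d i = 0")
          case True
          hence "isum u i = 0" using eqs[of i] by simp
          thus ?thesis using True by (cases t) (auto simp: isum_def)
        next
          case False
          hence "isum d i = 1" "isum u i = 1" using le1[of i] eqs[of i] by auto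
          thus ?thesis using G2[of d i u] nz[of i] by (auto split: if_splits)
        qed
      qed
      hence "u = d" by (intro poly_mapping_eqI) auto
      thus False using False by simp
    qed
    hence "(\<Prod>i\<in>UNIV. Gs d u i) = 0" by (intro prod_zero) auto
    thus ?thesis using eq False by simp
  qed
qed

lemma no_small_lm:
  fixes g :: "'n::finite pol"
  assumes t: "total_degree_order le" and gI: "g \<in> ideal_gen G_set" and g0: "g \<noteq> 0"
    and o: "opi d"
  shows "lm le g \<noteq> d"
proof
  assume lmd: "lm le g = d"
  have a: "admissible_order le" using tdo_adm[OF t] .
  have dk: "d \<in> Poly_Mapping.keys g" using lm_props[OF a g0] lmd by blast
  have degs: "\<And>u. u \<in> Poly_Mapping.keys g \<Longrightarrow> tdeg u \<le> tdeg d"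
    using lm_deg_bound[OF t g0] lmd by blast
  obtain j where j: "isum d j = 0" using o unfolding opi_def by blast
  have "\<And>q. q \<in> PiE UNIV (Qd d) \<Longrightarrow> ev (pt q) g = 0"
  proof -
    fix q assume "q \<in> PiE UNIV (Qd d)"
    hence "q j \<in> Qd d j" by blast
    hence "q j = (0,0)" using j by (simp add: Qd_def)
    thus "ev (pt q) g = 0" by (intro ev_ideal[OF good_pt gI])
  qed
  hence "0 = (\<Sum>q\<in>PiE UNIV (Qd d). ev (pt q) g)" by simp
  also have "\<dots> = (\<Sum>q\<in>PiE UNIV (Qd d). \<Sum>u\<in>Poly_Mapping.keys g. Poly_Mapping.lookup g u * mev (pt q) u)"
    by (simp add: ev_def)
  also have "\<dots> = (\<Sum>u\<in>Poly_Mapping.keys g. Poly_Mapping.lookup g u * (\<Sum>q\<in>PiE UNIV (Qd d). mev (pt q) u))"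
    by (subst sum.swap) (simp add: sum_distrib_left)
  also have "\<dots> = (\<Sum>u\<in>Poly_Mapping.keys g. Poly_Mapping.lookup g u * (if u = d then 1 else 0))"
    by (intro sum.cong refl) (simp add: phi_mon[OF o degs])
  also have "\<dots> = Poly_Mapping.lookup g d"
    using dk by (simp add: if_distrib cong: if_cong)
  finally have "Poly_Mapping.lookup g d = 0" by simp
  thus False using dk by (simp add: in_keys_iff)
qed



definition em :: "'n \<times> xyz \<Rightarrow> 'n mon" where "em v = Poly_Mapping.single v 1"
definition sq :: "'n \<times> xyz \<Rightarrow> 'n mon" where "sq v = Poly_Mapping.single v 2"
definition qm :: "'n \<times> xyz \<Rightarrow> 'n mon" where
  "qm v = (case snd v of VX \<Rightarrow> em (fst v, VY) + em (fst v, VZ)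
     | VY \<Rightarrow> em (fst v, VX) + em (fst v, VZ) | VZ \<Rightarrow> em (fst v, VX) + em (fst v, VY))"
definition cube :: "('n::finite \<Rightarrow> xyz) \<Rightarrow> 'n mon" where
  "cube c = (\<Sum>i\<in>UNIV. em (i, c i))"

lemma lookup_em: "Poly_Mapping.lookup (em v) w = (if w = v then 1 else 0)"
  by (auto simp: em_def lookup_single when_def)

lemma lookup_sq: "Poly_Mapping.lookup (sq v) w = (if w = v then 2 else 0)"
  by (auto simp: sq_def lookup_single when_def)

lemma lookup_qm: "Poly_Mapping.lookup (qm (i, t)) (j, s) = (if j = i \<and> s \<noteq> t then 1 else 0)"
  by (cases t; cases s) (auto simp: qm_def lookup_add lookup_em)

lemma lookup_cube: "Poly_Mapping.lookup (cube c) (j, s) = (if s = c j then 1 else 0)"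
proof -
  have "(\<lambda>i. Poly_Mapping.lookup (em (i, c i)) (j, s)) = (\<lambda>i. if j = i then (if s = c i then 1 else 0) else 0)"
    by (auto simp: lookup_em)
  hence "Poly_Mapping.lookup (cube c) (j, s) = (\<Sum>i\<in>UNIV. if j = i then (if s = c i then 1 else 0) else 0)"
    by (simp only: cube_def lookup_sum)
  also have "\<dots> = (if s = c j then 1 else 0)" by (subst sum.delta') auto
  finally show ?thesis .
qed

lemma isum_sq: "isum (sq (i, t)) j = (if j = i then 2 else 0)"
  by (cases t) (auto simp: isum_def lookup_sq)

lemma isum_qm: "isum (qm (i, t)) j = (if j = i then 2 else 0)"
  by (cases t) (auto simp: isum_def lookup_qm)

lemma isum_cube: "isum (cube c) j = 1"
  by (cases "c j") (auto simp: isum_def lookup_cube)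

lemma tdeg_em [simp]: "tdeg (em v :: 'n::finite mon) = 1"
  by (simp add: em_def)

lemma mdvd_isum: "mdvd d m \<Longrightarrow> isum d i \<le> isum m i"
  unfolding mdvd_def isum_def by (intro add_mono) auto

lemma mdvd_isum_strict: "mdvd d m \<Longrightarrow> Poly_Mapping.lookup d (i, s) < Poly_Mapping.lookup m (i, s) \<Longrightarrow> isum d i < isum m i"
  unfolding mdvd_def isum_def
  by (cases s) (auto intro: add_less_le_mono add_le_less_mono add_mono)

lemma mdvd_strict_ex: "mdvd d m \<Longrightarrow> d \<noteq> m \<Longrightarrow> \<exists>i s. Poly_Mapping.lookup d (i, s) < Poly_Mapping.lookup m (i, s)"
proof (rule ccontr)
  assume a: "mdvd d m" "d \<noteq> m" "\<not> (\<exists>i s. Poly_Mapping.lookup d (i, s) < Poly_Mapping.lookup m (i, s))"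
  have "\<And>v. Poly_Mapping.lookup d v = Poly_Mapping.lookup m v"
  proof -
    fix v :: "'a \<times> xyz"
    obtain i s where "v = (i, s)" by (cases v)
    thus "Poly_Mapping.lookup d v = Poly_Mapping.lookup m v" using a unfolding mdvd_def
      by (metis le_neq_implies_less)
  qed
  hence "d = m" by (intro poly_mapping_eqI) auto
  thus False using a by simp
qed

lemma other_index: "1 < CARD('n::finite) \<Longrightarrow> \<exists>j. j \<noteq> (i::'n)"
proof (rule ccontr)
  assume "1 < CARD('n)" "\<not> (\<exists>j. j \<noteq> i)"
  hence "(UNIV :: 'n set) = {i}" by auto
  hence "CARD('n) = 1" by (metis card.empty card_insert_disjoint empty_iff finite.emptyI One_nat_def)
  thus False using \<open>1 < CARD('n)\<close> by simp
qed

definition targets :: "'n::finite mon set" where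
  "targets = range sq \<union> range qm \<union> range cube"

lemma div_opi:
  fixes m d :: "'n::finite mon"
  assumes n: "1 < CARD('n)" and m: "m \<in> targets" and dv: "mdvd d m" and ne: "d \<noteq> m"
  shows "opi d"
proof -
  obtain i0 s0 where st: "Poly_Mapping.lookup d (i0, s0) < Poly_Mapping.lookup m (i0, s0)"
    using mdvd_strict_ex[OF dv ne] by blast
  have lt: "isum d i0 < isum m i0" using mdvd_isum_strict[OF dv st] .
  have le: "\<And>j. isum d j \<le> isum m j" using mdvd_isum[OF dv] .
  show ?thesis
  proof (cases "m \<in> range cube")
    case True
    then obtain c where "m = cube c" by blast
    hence "\<And>j. isum m j = 1" by (simp add: isum_cube)
    hence "isum d i0 = 0" using lt by simp
    moreover have "\<forall>j. isum d j \<le> 1" using le \<open>\<And>j. isum m j = 1\<close> by metis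
    ultimately show ?thesis unfolding opi_def by blast
  next
    case False
    then obtain i t where mi: "m = sq (i, t) \<or> m = qm (i, t)" using m unfolding targets_def by auto
    hence im: "\<And>j. isum m j = (if j = i then 2 else 0)" using isum_sq isum_qm by metis
    have "i0 = i" using lt im[of i0] by (auto split: if_splits)
    have d1: "\<And>j. isum d j \<le> 1"
    proof -
      fix j show "isum d j \<le> 1" using lt le[of j] im[of j] im[of i0] \<open>i0 = i\<close> by (cases "j = i") auto
    qed
    obtain j where "j \<noteq> i" using other_index[OF n] by blast
    hence "isum d j = 0" using le[of j] im[of j] by simp
    thus ?thesis unfolding opi_def using d1 by blast
  qed
qed



lemma var_mult: "var a * var b = Poly_Mapping.single (em a + em b) (1::bit)"
  by (simp add: var_def em_def mult_single)

lemma var_sq: "var v ^ 2 = Poly_Mapping.single (sq v) (1::bit)"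
proof -
  have "em v + em v = sq v" unfolding em_def sq_def by (simp only: single_add[symmetric] one_add_one)
  thus ?thesis by (simp add: power2_eq_square var_mult)
qed

lemma var_em: "var v = Poly_Mapping.single (em v) (1::bit)"
  by (simp add: var_def em_def)

lemma prod_var: "(\<Prod>i\<in>A. var (i, c i)) = Poly_Mapping.single (\<Sum>i\<in>A. em (i, c i)) (1::bit)"
  by (induction A rule: infinite_finite_induct) (auto simp: var_em mult_single)

lemma tdeg_qm: "tdeg (qm (v :: 'n::finite \<times> xyz)) = 2"
  by (cases "snd v") (auto simp: qm_def tdeg_add)

lemma tdeg_sq: "tdeg (sq (v :: 'n::finite \<times> xyz)) = 2"
  by (simp add: sq_def)

lemma ex_f:
  fixes m :: "'n::finite mon"
  assumes t: "total_degree_order le" and m: "m \<in> targets"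
  shows "\<exists>f\<in>ideal_gen G_set. f \<noteq> 0 \<and> lm le f = m"
proof -
  have key: "\<And>f. f \<in> G_set \<Longrightarrow> Poly_Mapping.lookup f m \<noteq> 0 \<Longrightarrow>
      (\<forall>u\<in>Poly_Mapping.keys f. u \<noteq> m \<longrightarrow> tdeg u < tdeg m) \<Longrightarrow> \<exists>f\<in>ideal_gen G_set. f \<noteq> 0 \<and> lm le f = m"
  proof -
    fix f assume f: "f \<in> G_set" "Poly_Mapping.lookup f m \<noteq> 0"
      "\<forall>u\<in>Poly_Mapping.keys f. u \<noteq> m \<longrightarrow> tdeg u < tdeg m"
    have "lm le f = m" by (rule lm_by_deg[OF t f(2,3)])
    moreover have "f \<noteq> 0" using f(2) by auto
    ultimately show "\<exists>f\<in>ideal_gen G_set. f \<noteq> 0 \<and> lm le f = m" using gen_in_ideal[OF f(1)] by blast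
  qed
  consider (a) v where "m = sq v" | (b) v where "m = qm v" | (c) c where "m = cube c"
    using m unfolding targets_def by blast
  thus ?thesis
  proof cases
    case (a v)
    let ?f = "var v ^ 2 - var v"
    have "?f \<in> G_set" unfolding G_set_def S_set_def by blast
    moreover have "sq v \<noteq> em v" using tdeg_sq[of v] tdeg_em[of v] by (intro notI) (drule arg_cong[of _ _ tdeg], simp)
    moreover have "?f = Poly_Mapping.single (sq v) 1 - Poly_Mapping.single (em v) 1"
      by (subst var_sq) (simp only: var_em)
    ultimately show ?thesis
      by (intro key) (auto simp: a lookup_minus lookup_single when_def tdeg_sq in_keys_iff split: if_splits)
  next
    case (b v)
    obtain i t where v: "v = (i, t)" by (cases v)
    show ?thesis
    proof (cases t)
      case VZ
      let ?f = "X i * Y i + X i + Y i - Z i"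
      have gen: "?f \<in> G_set" unfolding G_set_def L_set_def by blast
      have q: "em (i, VX) + em (i, VY) = qm v" by (simp add: v VZ qm_def)
      have ne: "\<And>w. qm v \<noteq> em w" using tdeg_qm[of v] tdeg_em by (intro notI) (drule arg_cong[of _ _ tdeg], simp)
      have fe: "?f = Poly_Mapping.single (qm v) 1 + Poly_Mapping.single (em (i, VX)) 1 + Poly_Mapping.single (em (i, VY)) 1 - Poly_Mapping.single (em (i, VZ)) 1"
        by (simp only: var_mult q) (simp only: var_em)
      show ?thesis
      proof (rule key[OF gen])
        show "Poly_Mapping.lookup ?f m \<noteq> 0" unfolding b fe using ne ne[symmetric]
          by (simp add: lookup_minus lookup_add lookup_single when_def)
        show "\<forall>u\<in>Poly_Mapping.keys ?f. u \<noteq> m \<longrightarrow> tdeg u < tdeg m"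
        proof (intro ballI impI)
          fix u assume "u \<in> Poly_Mapping.keys ?f" "u \<noteq> m"
          hence "u = em (i,VX) \<or> u = em (i,VY) \<or> u = em (i,VZ)" unfolding b fe
            by (auto simp: in_keys_iff lookup_minus lookup_add lookup_single when_def split: if_splits)
          thus "tdeg u < tdeg m" by (auto simp: b tdeg_qm)
        qed
      qed
    next
      case VY
      let ?f = "X i * Z i - X i"
      have gen: "?f \<in> G_set" unfolding G_set_def T_set_def by blast
      have q: "em (i, VX) + em (i, VZ) = qm v" by (simp add: v VY qm_def)
      have ne: "\<And>w. qm v \<noteq> em w" using tdeg_qm[of v] tdeg_em by (intro notI) (drule arg_cong[of _ _ tdeg], simp)
      have fe: "?f = Poly_Mapping.single (qm v) 1 - Poly_Mapping.single (em (i, VX)) 1"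
        by (simp only: var_mult q) (simp only: var_em)
      show ?thesis
      proof (rule key[OF gen])
        show "Poly_Mapping.lookup ?f m \<noteq> 0" unfolding b fe using ne ne[symmetric]
          by (simp add: lookup_minus lookup_add lookup_single when_def)
        show "\<forall>u\<in>Poly_Mapping.keys ?f. u \<noteq> m \<longrightarrow> tdeg u < tdeg m"
        proof (intro ballI impI)
          fix u assume "u \<in> Poly_Mapping.keys ?f" "u \<noteq> m"
          hence "u = em (i,VX) \<or> u = em (i,VY) \<or> u = em (i,VZ)" unfolding b fe
            by (auto simp: in_keys_iff lookup_minus lookup_add lookup_single when_def split: if_splits)
          thus "tdeg u < tdeg m" by (auto simp: b tdeg_qm)
        qed
      qed
    next
      case VX
      let ?f = "Y i * Z i - Y i"
      have gen: "?f \<in> G_set" unfolding G_set_def T_set_def by blast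
      have q: "em (i, VY) + em (i, VZ) = qm v" by (simp add: v VX qm_def)
      have ne: "\<And>w. qm v \<noteq> em w" using tdeg_qm[of v] tdeg_em by (intro notI) (drule arg_cong[of _ _ tdeg], simp)
      have fe: "?f = Poly_Mapping.single (qm v) 1 - Poly_Mapping.single (em (i, VY)) 1"
        by (simp only: var_mult q) (simp only: var_em)
      show ?thesis
      proof (rule key[OF gen])
        show "Poly_Mapping.lookup ?f m \<noteq> 0" unfolding b fe using ne ne[symmetric]
          by (simp add: lookup_minus lookup_add lookup_single when_def)
        show "\<forall>u\<in>Poly_Mapping.keys ?f. u \<noteq> m \<longrightarrow> tdeg u < tdeg m"
        proof (intro ballI impI)
          fix u assume "u \<in> Poly_Mapping.keys ?f" "u \<noteq> m"
          hence "u = em (i,VX) \<or> u = em (i,VY) \<or> u = em (i,VZ)" unfolding b fe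
            by (auto simp: in_keys_iff lookup_minus lookup_add lookup_single when_def split: if_splits)
          thus "tdeg u < tdeg m" by (auto simp: b tdeg_qm)
        qed
      qed
    qed
  next
    case (c c)
    let ?f = "(\<Prod>i\<in>UNIV. var (i, c i)) :: 'n pol"
    have "?f \<in> G_set" unfolding G_set_def P_set_def by blast
    moreover have "?f = Poly_Mapping.single (cube c) 1" by (simp add: prod_var cube_def)
    ultimately show ?thesis
      by (intro key) (auto simp: c)
  qed
qed



lemma inj_sq: "inj sq"
proof (rule injI)
  fix v w :: "'a \<times> xyz" assume "sq v = sq w"
  hence "Poly_Mapping.lookup (sq v) v = Poly_Mapping.lookup (sq w) v" by simp
  thus "v = w" by (simp add: lookup_sq split: if_splits)
qed

lemma inj_qm: "inj qm"
proof (rule injI)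
  fix v w :: "'a \<times> xyz" assume e: "qm v = qm w"
  obtain i t where v: "v = (i, t)" by (cases v)
  obtain j s where w: "w = (j, s)" by (cases w)
  obtain t' where t': "t' \<noteq> t" using xyz.distinct by (cases t) blast+
  have "Poly_Mapping.lookup (qm (i,t)) (i, t') = Poly_Mapping.lookup (qm (j,s)) (i, t')" using e v w by simp
  hence ij: "j = i" using t' by (simp add: lookup_qm split: if_splits)
  have "Poly_Mapping.lookup (qm (i,t)) (i, t) = Poly_Mapping.lookup (qm (j,s)) (i, t)" using e v w by simp
  hence "s = t" using ij by (simp add: lookup_qm split: if_splits)
  thus "v = w" using ij v w by simp
qed

lemma inj_cube: "inj (cube :: ('n::finite \<Rightarrow> xyz) \<Rightarrow> 'n mon)"
proof (rule injI)
  fix c d :: "'n \<Rightarrow> xyz" assume e: "cube c = cube d"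
  show "c = d"
  proof
    fix i
    have "Poly_Mapping.lookup (cube c) (i, c i) = Poly_Mapping.lookup (cube d) (i, c i)" using e by simp
    thus "c i = d i" by (simp add: lookup_cube split: if_splits)
  qed
qed

lemma card_targets:
  assumes n: "1 < CARD('n::finite)"
  shows "card (targets :: 'n mon set) = 6 * CARD('n) + 3 ^ CARD('n)"
proof -
  have c1: "card (range (sq :: 'n \<times> xyz \<Rightarrow> 'n mon)) = 3 * CARD('n)"
    using card_image[OF inj_sq[where 'a='n]] by (simp add: card_xyz)
  have c2: "card (range (qm :: 'n \<times> xyz \<Rightarrow> 'n mon)) = 3 * CARD('n)"
    using card_image[OF inj_qm[where 'a='n]] by (simp add: card_xyz)
  have c3: "card (range (cube :: ('n \<Rightarrow> xyz) \<Rightarrow> 'n mon)) = 3 ^ CARD('n)"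
    using card_image[OF inj_cube] by (simp add: card_fun card_xyz)
  have d12: "range (sq :: 'n \<times> xyz \<Rightarrow> 'n mon) \<inter> range qm = {}"
  proof (rule ccontr)
    assume "range (sq :: 'n \<times> xyz \<Rightarrow> 'n mon) \<inter> range qm \<noteq> {}"
    then obtain v w :: "'n \<times> xyz" where "sq v = qm w" by blast
    moreover obtain i t where "w = (i, t)" by (cases w)
    ultimately have "sq v = qm (i, t)" by simp
    hence "Poly_Mapping.lookup (sq v) v = Poly_Mapping.lookup (qm (i, t)) v" by simp
    thus False by (cases v) (simp add: lookup_sq lookup_qm split: if_splits)
  qed
  have d3: "(range (sq :: 'n \<times> xyz \<Rightarrow> 'n mon) \<union> range qm) \<inter> range cube = {}"
  proof (rule ccontr)
    assume "(range (sq :: 'n \<times> xyz \<Rightarrow> 'n mon) \<union> range qm) \<inter> range cube \<noteq> {}"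
    then obtain m :: "'n mon" and c :: "'n \<Rightarrow> xyz" where m: "m \<in> range sq \<union> range qm" and mc: "m = cube c" by blast
    show False
    proof (cases "m \<in> range sq")
      case True
      then obtain v where "m = sq v" by auto
      hence "Poly_Mapping.lookup (sq v) v = Poly_Mapping.lookup (cube c) v" using mc by simp
      thus False by (cases v) (simp add: lookup_sq lookup_cube split: if_splits)
    next
      case False
      then obtain i t where mq: "m = qm (i, t)" using m by auto
      obtain j where j: "j \<noteq> i" using other_index[OF n] by blast
      have "Poly_Mapping.lookup (qm (i, t)) (j, c j) = Poly_Mapping.lookup (cube c) (j, c j)" using mc mq by simp
      thus False using j by (simp add: lookup_qm lookup_cube)
    qed
  qed
  have "card (targets :: 'n mon set) = card (range (sq :: 'n \<times> xyz \<Rightarrow> 'n mon) \<union> range qm) + card (range (cube :: ('n \<Rightarrow> xyz) \<Rightarrow> 'n mon))"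
    unfolding targets_def by (rule card_Un_disjoint) (use d3 in auto)
  also have "card (range (sq :: 'n \<times> xyz \<Rightarrow> 'n mon) \<union> range qm) = 3 * CARD('n) + 3 * CARD('n)"
    using c1 c2 by (subst card_Un_disjoint) (use d12 in auto)
  finally show ?thesis using c3 by simp
qed

theorem lemma3:
  fixes le :: "'n::finite mon \<Rightarrow> 'n mon \<Rightarrow> bool"
    and G :: "'n pol set"
  assumes "CARD('n) > 1"
    and "total_degree_order le"
    and "is_groebner_basis le (ideal_gen G_set) G"
  shows "card G \<ge> 6 * CARD('n) + 3 ^ CARD('n)"
proof -
  have finG: "finite G" and GI: "G \<subseteq> ideal_gen G_set"
    and gb: "\<forall>f\<in>ideal_gen G_set. f \<noteq> 0 \<longrightarrow> (\<exists>g\<in>G. g \<noteq> 0 \<and> mdvd (lm le g) (lm le f))"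
    using assms(3) unfolding is_groebner_basis_def by auto
  have sub: "targets \<subseteq> lm le ` G"
  proof
    fix m :: "'n mon" assume m: "m \<in> targets"
    obtain f where f: "f \<in> ideal_gen G_set" "f \<noteq> 0" "lm le f = m" using ex_f[OF assms(2) m] by blast
    obtain g where g: "g \<in> G" "g \<noteq> 0" "mdvd (lm le g) m" using gb f by metis
    have "lm le g = m"
    proof (rule ccontr)
      assume "lm le g \<noteq> m"
      hence "opi (lm le g)" using div_opi[OF assms(1) m g(3)] by blast
      thus False using no_small_lm[OF assms(2) _ g(2)] g(1) GI by blast
    qed
    thus "m \<in> lm le ` G" using g(1) by blast
  qed
  have "card (targets :: 'n mon set) \<le> card (lm le ` G)"
    using sub finG by (intro card_mono) auto
  also have "\<dots> \<le> card G" using finG by (rule card_image_le)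
  finally show ?thesis using card_targets[OF assms(1)] by simp
qed

end
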